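(* Let $(X_k)_{k=1}^K$ be identically distributed random variables with a continuous CDF $F_X$ and tail quantile function $\bar q_X$, forming an $m$-dependent sequence ($m$ fixed). Let $(M_K)$ be positive integers with $M_K/K\to0$ and $M_K\ge(m+1)(e+\varepsilon)\ln K$ for some $\varepsilon>0$. Define $\mathcal M_K=\{k:\,X_k\ge X_{(K-M_K+1)}\}$ and let $\mathcal E\subseteq\{1,\dots,K\}$ with $E=|\mathcal E|$. Then there is $K_0$ such that for all $K>K_0$: \[ \Pr\Big(X_{(K-M_K+1)}>\bar q_X\big(\tfrac{M_K}{e(K+m+1)}\big)\Big)\le\frac{m+1}{K^{1+\varepsilon/3}} \] and \[ \Pr(\mathcal M_K\cap\mathcal E=\emptyset)\le(m+1)\exp\!\Big(-\frac{M_K}{e(m+1)}\cdot\frac{1-\frac{m+1}{K}}{1+\frac{m+1}{K}}\Big)+\Big(1-\frac{M_K}{e(K+m+1)}\Big)^{E/(m+1)}. \]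
   Context: $X_{(j)}$ denotes the $j$-th smallest of $X_1,\dots,X_K$. A sequence $(X_k)$ is $m$-dependent if for every $s$ the families $(X_k)_{k\le s}$ and $(X_k)_{k>s+m}$ are independent. Tail quantile function: $\bar q_X(p)=\min\{x:\,F_X(x)\ge1-p\}$. *)

theory Defs
  imports "HOL-Probability.Probability"
begin

definition ord_stat :: "(nat \<Rightarrow> real) \<Rightarrow> nat \<Rightarrow> nat \<Rightarrow> real" where
  "ord_stat x K j = sort (map x [1..<Suc K]) ! (j - 1)"

definition tail_quantile :: "(real \<Rightarrow> real) \<Rightarrow> real \<Rightarrow> real" where
  "tail_quantile F p = (LEAST x. F x \<ge> 1 - p)"

definition (in prob_space) m_dependent :: "nat \<Rightarrow> nat \<Rightarrow> (nat \<Rightarrow> 'a \<Rightarrow> real) \<Rightarrow> bool" where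
  "m_dependent m K X \<longleftrightarrow> (\<forall>s.
     indep_var (PiM {1..s} (\<lambda>_. borel)) (\<lambda>\<omega>. restrict (\<lambda>k. X k \<omega>) {1..s})
               (PiM {s+m+1..K} (\<lambda>_. borel)) (\<lambda>\<omega>. restrict (\<lambda>k. X k \<omega>) {s+m+1..K}))"

end

theory Submission
  imports Defs
begin


context prob_space begin

lemma indep_prod:
  assumes mdep: "m_dependent m K X"
    and meas: "\<And>k. X k \<in> borel_measurable M"
  shows "finite T \<Longrightarrow> T \<subseteq> {1..K} \<Longrightarrow>
    (\<And>k k'. k \<in> T \<Longrightarrow> k' \<in> T \<Longrightarrow> k < k' \<Longrightarrow> k + m < k') \<Longrightarrow>
    (\<And>k. k \<in> T \<Longrightarrow> U k \<in> sets borel) \<Longrightarrow>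
    prob {\<omega> \<in> space M. \<forall>k\<in>T. X k \<omega> \<in> U k} = (\<Prod>k\<in>T. prob {\<omega> \<in> space M. X k \<omega> \<in> U k})"
proof (induction "card T" arbitrary: T)
  case 0
  then have "T = {}" by auto
  then show ?case using prob_space by simp
next
  case (Suc n)
  then have Tne: "T \<noteq> {}" by auto
  define k0 where "k0 = Max T"
  have k0T: "k0 \<in> T" using Suc Tne by (simp add: k0_def)
  define T' where "T' = T - {k0}"
  have T'lt: "k < k0" if "k \<in> T'" for k
    using that Suc(3) by (auto simp: T'_def k0_def less_le)
  have IH: "prob {\<omega> \<in> space M. \<forall>k\<in>T'. X k \<omega> \<in> U k} = (\<Prod>k\<in>T'. prob {\<omega> \<in> space M. X k \<omega> \<in> U k})"
    apply (rule Suc(1))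
    using Suc(2-6) k0T by (auto simp: T'_def)
  have Teq: "T = insert k0 T'" using k0T by (auto simp: T'_def)
  show ?case
  proof (cases "T' = {}")
    case True
    then show ?thesis using Teq by simp
  next
    case False
    then obtain k1 where k1: "k1 \<in> T'" by auto
    have "k1 + m < k0" using Suc(5)[of k1 k0] k1 T'lt[OF k1] k0T by (auto simp: T'_def)
    then have k0m: "k0 \<ge> m + 1" by simp
    define s where "s = k0 - (m+1)"
    have T's: "T' \<subseteq> {1..s}"
    proof
      fix k assume k: "k \<in> T'"
      have "k + m < k0" using Suc(5)[of k k0] k T'lt[OF k] k0T by (auto simp: T'_def)
      moreover have "k \<ge> 1" using k Suc(4) by (auto simp: T'_def)
      ultimately show "k \<in> {1..s}" by (auto simp: s_def)
    qed
    have k0s: "k0 \<in> {s+m+1..K}" using k0m k0T Suc(4) by (auto simp: s_def)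
    have iv: "indep_var (PiM {1..s} (\<lambda>_. borel)) (\<lambda>\<omega>. restrict (\<lambda>k. X k \<omega>) {1..s})
               (PiM {s+m+1..K} (\<lambda>_. borel)) (\<lambda>\<omega>. restrict (\<lambda>k. X k \<omega>) {s+m+1..K})"
      using mdep unfolding m_dependent_def by blast
    define C where "C = {f \<in> space (PiM {1..s} (\<lambda>_. borel)). \<forall>k\<in>T'. f k \<in> U k}"
    define D where "D = {g \<in> space (PiM {s+m+1..K} (\<lambda>_. borel::real measure)). g k0 \<in> U k0}"
    have Csets: "C \<in> sets (PiM {1..s} (\<lambda>_. borel))"
    proof -
      have "C = space (PiM {1..s} (\<lambda>_. borel)) \<inter> (\<Inter>k\<in>T'. (\<lambda>f. f k) -` U k \<inter> space (PiM {1..s} (\<lambda>_. borel::real measure)))"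
        by (auto simp: C_def)
      also have "\<dots> \<in> sets (PiM {1..s} (\<lambda>_. borel))"
        apply (rule sets.Int)
        apply simp
        apply (rule sets.finite_INT)
        using False Suc(3) T's Suc(6) unfolding T'_def
          apply (auto intro!: measurable_sets[OF measurable_component_singleton])
        done
      finally show ?thesis .
    qed
    have Dsets: "D \<in> sets (PiM {s+m+1..K} (\<lambda>_. borel))"
    proof -
      have "D = (\<lambda>f. f k0) -` U k0 \<inter> space (PiM {s+m+1..K} (\<lambda>_. borel::real measure))"
        by (auto simp: D_def)
      also have "\<dots> \<in> sets (PiM {s+m+1..K} (\<lambda>_. borel))"
        using k0s Suc(6)[OF k0T] by (auto intro!: measurable_sets[OF measurable_component_singleton])
      finally show ?thesis .
    qed
    have r1: "1 \<le> k \<and> k \<le> s" if "k \<in> T'" for k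
      using T's that by auto
    have R1: "restrict (\<lambda>k. X k \<omega>) {1..s} \<in> C \<longleftrightarrow> (\<forall>k\<in>T'. X k \<omega> \<in> U k)" for \<omega>
      unfolding C_def by (auto simp: space_PiM dest: r1) (frule r1, drule (1) bspec, simp)
    have R2: "restrict (\<lambda>k. X k \<omega>) {s+m+1..K} \<in> D \<longleftrightarrow> X k0 \<omega> \<in> U k0" for \<omega>
      unfolding D_def using k0s by (simp add: space_PiM)
    have e1: "(\<lambda>\<omega>. (restrict (\<lambda>k. X k \<omega>) {1..s}, restrict (\<lambda>k. X k \<omega>) {s+m+1..K})) -` (C \<times> D) \<inter> space M
       = {\<omega> \<in> space M. \<forall>k\<in>T. X k \<omega> \<in> U k}"
      using R1 R2 Teq by auto
    have e2: "(\<lambda>\<omega>. restrict (\<lambda>k. X k \<omega>) {1..s}) -` C \<inter> space M = {\<omega> \<in> space M. \<forall>k\<in>T'. X k \<omega> \<in> U k}"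
      using R1 by auto
    have e3: "(\<lambda>\<omega>. restrict (\<lambda>k. X k \<omega>) {s+m+1..K}) -` D \<inter> space M = {\<omega> \<in> space M. X k0 \<omega> \<in> U k0}"
      using R2 by auto
    have "prob {\<omega> \<in> space M. \<forall>k\<in>T. X k \<omega> \<in> U k} =
        prob {\<omega> \<in> space M. \<forall>k\<in>T'. X k \<omega> \<in> U k} * prob {\<omega> \<in> space M. X k0 \<omega> \<in> U k0}"
      using indep_varD[OF iv Csets Dsets] unfolding e1 e2 e3 .
    also have "\<dots> = prob {\<omega> \<in> space M. X k0 \<omega> \<in> U k0} * (\<Prod>k\<in>T'. prob {\<omega> \<in> space M. X k \<omega> \<in> U k})"
      by (simp only: IH mult.commute)
    also have "\<dots> = (\<Prod>k\<in>insert k0 T'. prob {\<omega> \<in> space M. X k \<omega> \<in> U k})"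
      by (rule prod.insert[symmetric]) (use Suc(3) in \<open>auto simp: T'_def\<close>)
    finally show ?thesis unfolding Teq[symmetric] .
  qed
qed

end



context prob_space begin

lemma chernoff:
  assumes mdep: "m_dependent m K X"
    and meas: "\<And>k. X k \<in> borel_measurable M"
    and S: "S \<subseteq> {1..K}"
    and gap: "\<And>k k'. k \<in> S \<Longrightarrow> k' \<in> S \<Longrightarrow> k < k' \<Longrightarrow> k + m < k'"
    and U: "U \<in> sets borel"
    and pk: "\<And>k. k \<in> S \<Longrightarrow> prob {\<omega> \<in> space M. X k \<omega> \<in> U} \<le> p"
    and p0: "0 \<le> p"
  shows "prob {\<omega> \<in> space M. a \<le> (\<Sum>k\<in>S. indicator U (X k \<omega>))}
          \<le> exp ((exp 1 - 1) * real (card S) * p - a)"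
proof -
  have finS: "finite S" using S finite_subset by blast
  define E where "E T = {\<omega> \<in> space M. \<forall>k\<in>T. X k \<omega> \<in> U}" for T
  have Esets: "E T \<in> sets M" if "T \<subseteq> S" for T
  proof -
    have "finite T" using that finS finite_subset by blast
    then show ?thesis unfolding E_def using U meas by measurable
  qed
  have Esp: "E T \<inter> space M = E T" for T by (auto simp: E_def)
  define c where "c = exp 1 - (1::real)"
  have c0: "0 \<le> c" unfolding c_def by (simp add: exp_ge_add_one_self[of 1, simplified])
  define Z where "Z \<omega> = (\<Sum>T\<in>Pow S. c ^ card T * indicator (E T) \<omega>)" for \<omega>
  have Zint: "integrable M Z"
    unfolding Z_def
    apply (rule Bochner_Integration.integrable_sum)
    apply (rule integrable_mult_right)
    apply (rule integrable_real_indicator)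
    using Esets apply (auto simp: less_top[symmetric])
    done
  have Zeq: "Z \<omega> = exp (\<Sum>k\<in>S. indicator U (X k \<omega>))" if \<omega>: "\<omega> \<in> space M" for \<omega>
  proof -
    have ind: "(\<Prod>k\<in>T. indicator U (X k \<omega>)) = (indicator (E T) \<omega> :: real)" if "T \<subseteq> S" for T
    proof (cases "\<forall>k\<in>T. X k \<omega> \<in> U")
      case True
      then show ?thesis using \<omega> by (simp add: E_def)
    next
      case False
      then obtain k where "k \<in> T" "X k \<omega> \<notin> U" by auto
      moreover have "finite T" using that finS finite_subset by blast
      ultimately have "(\<Prod>k\<in>T. indicator U (X k \<omega>)) = (0::real)"
        by (intro prod_zero) (auto intro!: bexI[of _ k])
      moreover have "\<omega> \<notin> E T" using \<open>k \<in> T\<close> \<open>X k \<omega> \<notin> U\<close> by (auto simp: E_def)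
      ultimately show ?thesis by simp
    qed
    have "Z \<omega> = (\<Sum>T\<in>Pow S. (\<Prod>k\<in>T. c * indicator U (X k \<omega>)) * (\<Prod>k\<in>S-T. 1))"
      unfolding Z_def
      by (intro sum.cong refl) (simp add: prod.distrib ind)
    also have "\<dots> = (\<Prod>k\<in>S. c * indicator U (X k \<omega>) + 1)"
      by (rule prod_add[symmetric]) (rule finS)
    also have "\<dots> = (\<Prod>k\<in>S. exp (indicator U (X k \<omega>)))"
      by (intro prod.cong refl) (simp add: c_def indicator_def)
    also have "\<dots> = exp (\<Sum>k\<in>S. indicator U (X k \<omega>))"
      by (rule exp_sum[symmetric]) (rule finS)
    finally show ?thesis .
  qed
  have "prob {\<omega> \<in> space M. a \<le> (\<Sum>k\<in>S. indicator U (X k \<omega>))} = prob {\<omega> \<in> space M. exp a \<le> Z \<omega>}"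
    by (intro arg_cong[where f=prob] Collect_cong) (auto simp: Zeq)
  also have "\<dots> \<le> (\<integral>\<omega>. Z \<omega> \<partial>M) / exp a"
    by (rule integral_Markov_inequality_measure[OF Zint, of "space M"]) (auto simp: Z_def c0 intro!: AE_I2 sum_nonneg)
  also have "(\<integral>\<omega>. Z \<omega> \<partial>M) = (\<Sum>T\<in>Pow S. c ^ card T * prob (E T))"
    unfolding Z_def
    by (subst Bochner_Integration.integral_sum) (auto simp: less_top[symmetric] intro!: integrable_mult_right integrable_real_indicator Esets sum.cong
        simp: Esp)
  also have "\<dots> \<le> (\<Sum>T\<in>Pow S. c ^ card T * p ^ card T)"
  proof (intro sum_mono mult_left_mono)
    fix T assume T: "T \<in> Pow S"
    have fT: "finite T" using T finS finite_subset by auto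
    have "prob (E T) = (\<Prod>k\<in>T. prob {\<omega> \<in> space M. X k \<omega> \<in> U})"
      unfolding E_def
      by (rule indep_prod[OF mdep meas fT]) (use T S U in auto, use T gap in blast)
    also have "\<dots> \<le> (\<Prod>k\<in>T. p)"
      by (intro prod_mono) (use T pk in auto)
    finally show "prob (E T) \<le> p ^ card T" by simp
    show "0 \<le> c ^ card T" using c0 by simp
  qed
  also have "\<dots> = (\<Sum>T\<in>Pow S. (\<Prod>k\<in>T. c * p) * (\<Prod>k\<in>S-T. 1))"
    by (simp add: power_mult_distrib)
  also have "\<dots> = (\<Prod>k\<in>S. c * p + 1)"
    by (rule prod_add[symmetric]) (rule finS)
  also have "\<dots> = (c * p + 1) ^ card S" by simp
  also have "\<dots> \<le> exp (c * p) ^ card S"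
    by (intro power_mono) (use c0 p0 in \<open>auto simp: add.commute\<close>)
  also have "\<dots> = exp (real (card S) * (c * p))" by (simp add: exp_of_nat_mult)
  finally have "prob {\<omega> \<in> space M. a \<le> (\<Sum>k\<in>S. indicator U (X k \<omega>))} \<le> exp (real (card S) * (c * p)) / exp a"
    by (simp add: divide_right_mono)
  also have "\<dots> = exp ((exp 1 - 1) * real (card S) * p - a)"
    by (simp add: exp_diff c_def mult_ac)
  finally show ?thesis .
qed

end



context prob_space begin

lemma quantile:
  fixes Y :: "'a \<Rightarrow> real"
  assumes Y: "Y \<in> borel_measurable M"
    and FY: "\<And>x. prob {\<omega> \<in> space M. Y \<omega> \<le> x} = F x"
    and cont: "continuous_on UNIV F" and p: "0 < p" "p < 1"
  shows "prob {\<omega> \<in> space M. Y \<omega> > tail_quantile F p} \<le> p"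
    and "prob {\<omega> \<in> space M. Y \<omega> < tail_quantile F p} \<le> 1 - p"
proof -
  have ev_le: "\<And>x. {\<omega> \<in> space M. Y \<omega> \<le> x} \<in> events" using Y by measurable
  have Fmono: "F x \<le> F y" if "x \<le> y" for x y
    unfolding FY[symmetric] using that
    by (intro finite_measure_mono) (auto intro!: ev_le)
  define A where "A n = {\<omega> \<in> space M. Y \<omega> \<le> real n}" for n
  have "(\<lambda>n. prob (A n)) \<longlonglongrightarrow> prob (\<Union>n. A n)"
    by (rule finite_Lim_measure_incseq) (auto simp: A_def incseq_def intro!: ev_le)
  moreover have "(\<Union>n. A n) = space M"
    by (auto simp: A_def intro: real_nat_ceiling_ge)
  ultimately have "(\<lambda>n. F (real n)) \<longlonglongrightarrow> 1" by (simp add: A_def FY prob_space)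
  then have "eventually (\<lambda>n. F (real n) > 1 - p) sequentially"
    using p by (intro order_tendstoD) auto
  then obtain n1 where n1: "F (real n1) > 1 - p" by (meson eventually_sequentially order.refl)
  define B where "B n = {\<omega> \<in> space M. Y \<omega> \<le> - real n}" for n
  have "(\<lambda>n. prob (B n)) \<longlonglongrightarrow> prob (\<Inter>n. B n)"
    by (rule finite_Lim_measure_decseq) (auto simp: B_def decseq_def intro!: ev_le)
  moreover have "(\<Inter>n. B n) = {}"
  proof -
    have "\<exists>n. \<not> Y \<omega> \<le> - real n" for \<omega>
      using reals_Archimedean2[of "- Y \<omega>"] by (metis add.inverse_inverse neg_le_iff_le not_le)
    then show ?thesis by (auto simp: B_def)
  qed
  ultimately have "(\<lambda>n. F (- real n)) \<longlonglongrightarrow> 0" by (simp add: B_def FY)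
  then have "eventually (\<lambda>n. F (- real n) < 1 - p) sequentially"
    using p by (intro order_tendstoD) auto
  then obtain n2 where n2: "F (- real n2) < 1 - p" by (meson eventually_sequentially order.refl)
  define S where "S = {x. 1 - p \<le> F x}"
  have Sne: "S \<noteq> {}" using n1 by (auto simp: S_def intro!: exI[of _ "real n1"])
  have Sbdd: "bdd_below S"
  proof (rule bdd_belowI)
    fix x assume "x \<in> S"
    then show "- real n2 \<le> x" using n2 Fmono[of x "- real n2"] by (force simp: S_def)
  qed
  have Scl: "closed S" unfolding S_def
    by (rule closed_Collect_le) (auto intro: cont continuous_intros)
  have InfS: "Inf S \<in> S" by (rule closed_contains_Inf[OF Sne Sbdd Scl])
  have q: "tail_quantile F p = Inf S"
    unfolding tail_quantile_def
    by (rule Least_equality) (use InfS Sbdd in \<open>auto simp: S_def intro: cInf_lower\<close>)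
  define q where "q = Inf S"
  have Fq1: "1 - p \<le> F q" using InfS by (simp add: S_def q_def)
  have below: "F y < 1 - p" if "y < q" for y
  proof (rule ccontr)
    assume "\<not> F y < 1 - p"
    then have "y \<in> S" by (simp add: S_def)
    then have "q \<le> y" unfolding q_def by (rule cInf_lower[OF _ Sbdd])
    then show False using that by simp
  qed
  have "(\<lambda>n. F (q - 1 / (real n + 1))) \<longlonglongrightarrow> F q"
  proof -
    have "(\<lambda>n. q - inverse (real (Suc n))) \<longlonglongrightarrow> q - 0"
      by (intro tendsto_intros LIMSEQ_inverse_real_of_nat)
    then have "(\<lambda>n. q - 1 / (real n + 1)) \<longlonglongrightarrow> q - 0"
      by (simp add: inverse_eq_divide add.commute)
    then show ?thesis
      using cont by (auto intro: continuous_on_tendsto_compose[where s=UNIV])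
  qed
  then have Fq2: "F q \<le> 1 - p"
    by (rule LIMSEQ_le_const2) (auto intro!: less_imp_le below)
  have "prob {\<omega> \<in> space M. Y \<omega> > q} = 1 - prob {\<omega> \<in> space M. Y \<omega> \<le> q}"
  proof -
    have "{\<omega> \<in> space M. Y \<omega> > q} = space M - {\<omega> \<in> space M. Y \<omega> \<le> q}" by auto
    then show ?thesis by (simp add: prob_compl ev_le)
  qed
  then show "prob {\<omega> \<in> space M. Y \<omega> > tail_quantile F p} \<le> p"
    using Fq1 by (simp add: q q_def FY)
  have "prob {\<omega> \<in> space M. Y \<omega> < q} \<le> prob {\<omega> \<in> space M. Y \<omega> \<le> q}"
    by (intro finite_measure_mono) (auto intro!: ev_le)
  then show "prob {\<omega> \<in> space M. Y \<omega> < tail_quantile F p} \<le> 1 - p"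
    using Fq2 by (simp add: q q_def FY)
qed

end



lemma ord_stat_count:
  fixes x :: "nat \<Rightarrow> real"
  assumes "1 \<le> Mk" "Mk \<le> K" and gt: "ord_stat x K (K - Mk + 1) > q"
  shows "Mk \<le> card {k \<in> {1..K}. x k > q}"
proof -
  define xs where "xs = sort (map x [1..<Suc K])"
  have len: "length xs = K" by (simp add: xs_def)
  have sorted: "sorted xs" by (simp add: xs_def)
  have o: "xs ! (K - Mk) > q" using gt assms(1,2) by (simp add: ord_stat_def xs_def)
  have "\<forall>y\<in>set (drop (K - Mk) xs). y > q"
  proof
    fix y assume "y \<in> set (drop (K - Mk) xs)"
    then obtain i where i: "i < length (drop (K - Mk) xs)" "y = drop (K - Mk) xs ! i"
      by (auto simp: in_set_conv_nth)
    then have "y = xs ! (K - Mk + i)" "K - Mk + i < K" using len assms by auto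
    moreover have "xs ! (K - Mk) \<le> xs ! (K - Mk + i)"
      using sorted \<open>K - Mk + i < K\<close> len by (intro sorted_nth_mono) auto
    ultimately show "y > q" using o by simp
  qed
  then have "filter (\<lambda>y. y > q) (drop (K - Mk) xs) = drop (K - Mk) xs" by simp
  then have "Mk \<le> length (filter (\<lambda>y. y > q) (drop (K - Mk) xs))" using len assms by simp
  also have "\<dots> \<le> length (filter (\<lambda>y. y > q) xs)"
  proof -
    have "xs = take (K - Mk) xs @ drop (K - Mk) xs" by simp
    then have "length (filter (\<lambda>y. y > q) xs) = length (filter (\<lambda>y. y > q) (take (K - Mk) xs))
        + length (filter (\<lambda>y. y > q) (drop (K - Mk) xs))"
      by (metis filter_append length_append)
    then show ?thesis by simp
  qed
  also have "\<dots> = length (filter (\<lambda>y. y > q) (map x [1..<Suc K]))"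
    unfolding xs_def by (metis mset_filter mset_sort size_mset)
  also have "\<dots> = length (filter (\<lambda>k. x k > q) [1..<Suc K])"
    by (simp add: filter_map comp_def)
  also have "\<dots> = card {k \<in> {1..K}. x k > q}"
    by (subst distinct_length_filter) (auto intro!: arg_cong[where f=card])
  finally show ?thesis .
qed

lemma card_class:
  assumes d: "0 < (d::nat)"
  shows "card {k \<in> {1..K}. k mod d = r} * d \<le> K + d"
proof -
  have "inj_on (\<lambda>k. k div d) {k \<in> {1..K}. k mod d = r}"
    by (rule inj_onI) (metis (mono_tags, lifting) div_mod_decomp mem_Collect_eq)
  moreover have "(\<lambda>k. k div d) ` {k \<in> {1..K}. k mod d = r} \<subseteq> {0..K div d}"
    by (auto intro: div_le_mono)
  ultimately have "card {k \<in> {1..K}. k mod d = r} \<le> card {0..K div d}"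
    by (metis card_inj_on_le finite_atLeastAtMost)
  then have "card {k \<in> {1..K}. k mod d = r} \<le> K div d + 1" by simp
  then have "card {k \<in> {1..K}. k mod d = r} * d \<le> (K div d + 1) * d" by (rule mult_right_mono) simp
  also have "\<dots> \<le> K + d" by (simp add: add_mult_distrib)
  finally show ?thesis .
qed

lemma class_gap:
  assumes "k mod Suc m = r" "k' mod Suc m = r" "k < k'"
  shows "k + m < k'"
proof (rule ccontr)
  assume "\<not> k + m < k'"
  then have "k' - k < Suc m" "0 < k' - k" using assms by auto
  moreover have "(k' - k) mod Suc m = 0" using assms
    by (metis less_imp_le mod_eq_dvd_iff_nat dvd_imp_mod_0)
  ultimately show False by simp
qed

lemma card_split_classes:
  fixes A :: "nat set"
  assumes "finite A" "0 < (d::nat)"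
  shows "card A = (\<Sum>r<d. card {k \<in> A. k mod d = r})"
proof -
  have "A = (\<Union>r<d. {k \<in> A. k mod d = r})" using assms by (auto intro: mod_less_divisor)
  then have "card A = card (\<Union>r<d. {k \<in> A. k mod d = r})" by simp
  also have "\<dots> = (\<Sum>r<d. card {k \<in> A. k mod d = r})"
    by (rule card_UN_disjoint) (use assms in auto)
  finally show ?thesis .
qed

lemma exists_big_class:
  fixes A :: "nat set"
  assumes "finite A" "0 < (d::nat)"
  shows "\<exists>r<d. real (card A) / real d \<le> real (card {k \<in> A. k mod d = r})"
proof (rule ccontr)
  assume "\<not> ?thesis"
  then have lt: "\<And>r. r < d \<Longrightarrow> real (card {k \<in> A. k mod d = r}) < real (card A) / real d" by auto
  have "real (card A) = (\<Sum>r<d. real (card {k \<in> A. k mod d = r}))"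
    using card_split_classes[OF assms] by (simp flip: of_nat_sum)
  also have "\<dots> < (\<Sum>r<d. real (card A) / real d)"
    by (rule sum_strict_mono) (use lt assms in auto)
  also have "\<dots> = real (card A)" using assms by simp
  finally show False by simp
qed




lemma sum_ind_card:
  fixes f :: "nat \<Rightarrow> real"
  assumes "finite A"
  shows "(\<Sum>k\<in>A. indicator U (f k) :: real) = real (card {k \<in> A. f k \<in> U})"
proof -
  have "(\<Sum>k\<in>A. indicator U (f k) :: real) = (\<Sum>k\<in>A. if f k \<in> U then 1 else 0)"
    by (intro sum.cong) (auto simp: indicator_def)
  also have "\<dots> = (\<Sum>k\<in>{k \<in> A. f k \<in> U}. 1)"
    by (rule sum.inter_filter[symmetric, OF assms])
  finally show ?thesis by simp
qed

context prob_space begin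

lemma G_bound:
  assumes mdep: "m_dependent m K X"
    and meas: "\<And>k. X k \<in> borel_measurable M"
    and U: "U \<in> sets borel"
    and pk: "\<And>k. k \<in> {1..K} \<Longrightarrow> prob {\<omega> \<in> space M. X k \<omega> \<in> U} \<le> p"
    and p0: "0 \<le> p"
    and pdef: "p = real Mk / (exp 1 * real (K + m + 1))"
  shows "prob {\<omega> \<in> space M. real Mk \<le> (\<Sum>k\<in>{1..K}. indicator U (X k \<omega>))}
          \<le> real (m + 1) * exp (- (real Mk / (exp 1 * real (m + 1))))"
proof -
  define d where "d = m + 1"
  have d0: "0 < d" by (simp add: d_def)
  define S where "S r = {k \<in> {1..K}. k mod d = r}" for r
  define G where "G r = {\<omega> \<in> space M. real Mk / real d \<le> (\<Sum>k\<in>S r. indicator U (X k \<omega>))}" for r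
  have Gsets: "G r \<in> events" for r
    unfolding G_def using U meas by measurable
  have sub: "{\<omega> \<in> space M. real Mk \<le> (\<Sum>k\<in>{1..K}. indicator U (X k \<omega>))} \<subseteq> (\<Union>r\<in>{..<d}. G r)"
  proof
    fix \<omega> assume \<omega>: "\<omega> \<in> {\<omega> \<in> space M. real Mk \<le> (\<Sum>k\<in>{1..K}. indicator U (X k \<omega>))}"
    have split: "(\<Sum>k\<in>{1..K}. indicator U (X k \<omega>)) = (\<Sum>r\<in>{..<d}. (\<Sum>k\<in>S r. indicator U (X k \<omega>)) :: real)"
      unfolding S_def
      by (rule sum.group[symmetric]) (auto simp: d0)
    show "\<omega> \<in> (\<Union>r\<in>{..<d}. G r)"
    proof (rule ccontr)
      assume "\<omega> \<notin> (\<Union>r\<in>{..<d}. G r)"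
      then have lt: "(\<Sum>k\<in>S r. indicator U (X k \<omega>)) < real Mk / real d" if "r < d" for r
        using \<omega> that by (auto simp: G_def not_le)
      have "(\<Sum>r\<in>{..<d}. (\<Sum>k\<in>S r. indicator U (X k \<omega>)) :: real) < (\<Sum>r\<in>{..<d}. real Mk / real d)"
        by (rule sum_strict_mono) (use lt d0 in auto)
      also have "\<dots> = real Mk" using d0 by simp
      finally show False using \<omega> split by simp
    qed
  qed
  have "prob {\<omega> \<in> space M. real Mk \<le> (\<Sum>k\<in>{1..K}. indicator U (X k \<omega>))} \<le> prob (\<Union>r\<in>{..<d}. G r)"
    by (rule finite_measure_mono[OF sub]) (auto intro: Gsets)
  also have "\<dots> \<le> (\<Sum>r\<in>{..<d}. prob (G r))"
    by (rule measure_UNION_le) (auto intro: Gsets)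
  also have "\<dots> \<le> (\<Sum>r\<in>{..<d}. exp (- (real Mk / (exp 1 * real d))))"
  proof (rule sum_mono)
    fix r assume r: "r \<in> {..<d}"
    have "prob (G r) \<le> exp ((exp 1 - 1) * real (card (S r)) * p - real Mk / real d)"
      unfolding G_def
      by (rule chernoff[OF mdep meas _ _ U _ p0]) (auto simp: S_def d_def intro: pk class_gap)
    also have "\<dots> \<le> exp (- (real Mk / (exp 1 * real d)))"
    proof -
      have cS: "real (card (S r)) * real d \<le> real K + real d"
        using card_class[OF d0, of K r] unfolding S_def by (metis of_nat_add of_nat_le_iff of_nat_mult)
      have e1: "exp 1 - 1 \<ge> (0::real)" using exp_ge_add_one_self[of 1] by simp
      have hp: "p = real Mk / (exp 1 * (real K + real d))" by (simp add: pdef d_def)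
      have pos: "real d > 0" "real K + real d > 0" "exp 1 > (0::real)" using d0 by auto
      have "real (card (S r)) * p = real (card (S r)) * real d * (real Mk / (exp 1 * (real K + real d)) / real d)"
        using pos unfolding hp by simp
      also have "\<dots> = real (card (S r)) * real d * (real Mk / (exp 1 * real d * (real K + real d)))"
        by (simp add: mult_ac)
      also have "\<dots> \<le> (real K + real d) * (real Mk / (exp 1 * real d * (real K + real d)))"
        by (rule mult_right_mono[OF cS]) simp
      also have "\<dots> = ((real K + real d) * real Mk) / ((real K + real d) * (exp 1 * real d))"
        by (simp add: mult_ac)
      also have "\<dots> = real Mk / (exp 1 * real d)"
        using pos by (subst mult_divide_mult_cancel_left) auto
      finally have cp: "real (card (S r)) * p \<le> real Mk / (exp 1 * real d)" .
      have "(exp 1 - 1) * real (card (S r)) * p \<le> (exp 1 - 1) * (real Mk / (exp 1 * real d))"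
        using mult_left_mono[OF cp e1] by (simp only: mult.assoc)
      moreover have "(exp 1 - 1) * (real Mk / (exp 1 * real d)) - real Mk / real d = - (real Mk / (exp 1 * real d))"
        using d0 by (simp add: field_simps)
      ultimately show ?thesis by simp
    qed
    finally show "prob (G r) \<le> exp (- (real Mk / (exp 1 * real d)))" .
  qed
  also have "\<dots> = real (m + 1) * exp (- (real Mk / (exp 1 * real (m + 1))))"
    by (simp add: d_def)
  finally show ?thesis .
qed

end




theorem mainTheorem14:
  fixes M :: "'a measure"
    and X :: "nat \<Rightarrow> nat \<Rightarrow> 'a \<Rightarrow> real"
    and F :: "real \<Rightarrow> real"
    and m :: nat
    and MK :: "nat \<Rightarrow> nat"
    and \<epsilon> :: real
  assumes "prob_space M"
    and meas: "\<And>K k. X K k \<in> borel_measurable M"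
    and ident: "\<And>K k x. 1 \<le> k \<Longrightarrow> k \<le> K \<Longrightarrow>
                  measure M {\<omega> \<in> space M. X K k \<omega> \<le> x} = F x"
    and cont: "continuous_on UNIV F"
    and mdep: "\<And>K. prob_space.m_dependent M m K (X K)"
    and MK_pos: "\<And>K. MK K > 0"
    and MK_lim: "(\<lambda>K. real (MK K) / real K) \<longlonglongrightarrow> 0"
    and eps: "\<epsilon> > 0"
    and MK_ge: "\<And>K. real (MK K) \<ge> real (m + 1) * (exp 1 + \<epsilon>) * ln (real K)"
  shows "\<exists>K0. \<forall>K > K0.
     measure M {\<omega> \<in> space M.
        ord_stat (\<lambda>k. X K k \<omega>) K (K - MK K + 1)
          > tail_quantile F (real (MK K) / (exp 1 * real (K + m + 1)))}
       \<le> real (m + 1) / real K powr (1 + \<epsilon> / 3)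
   \<and> (\<forall>E \<subseteq> {1..K}.
       measure M {\<omega> \<in> space M.
          {k \<in> {1..K}. X K k \<omega> \<ge> ord_stat (\<lambda>k. X K k \<omega>) K (K - MK K + 1)} \<inter> E = {}}
       \<le> real (m + 1) * exp (- (real (MK K) / (exp 1 * real (m + 1)))
                 * ((1 - real (m + 1) / real K) / (1 + real (m + 1) / real K)))
         + (1 - real (MK K) / (exp 1 * real (K + m + 1))) powr (real (card E) / real (m + 1)))"
proof -
  interpret P: prob_space M by fact
  have "eventually (\<lambda>K. real (MK K) / real K < 1) sequentially"
    using MK_lim by (intro order_tendstoD) auto
  then obtain N where N: "\<And>K. K \<ge> N \<Longrightarrow> real (MK K) / real K < 1"
    unfolding eventually_sequentially by blast
  show ?thesis
  proof (intro exI[of _ N] allI impI)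
    fix K assume KN: "K > N"
    have K1: "K \<ge> 1" using KN by simp
    have "real (MK K) / real K < 1" by (rule N) (use KN in simp)
    then have MkK: "MK K \<le> K" using K1 by (simp add: divide_less_eq)
    have Mk1: "1 \<le> MK K" using MK_pos[of K] by simp
    define p where "p = real (MK K) / (exp 1 * real (K + m + 1))"
    define q where "q = tail_quantile F p"
    define d where "d = m + 1"
    have e1: "(1::real) < exp 1" by simp
    have p0: "0 < p" unfolding p_def using Mk1 by (simp add: divide_pos_pos)
    have p1: "p < 1"
    proof -
      have "real (MK K) < exp 1 * real (K + m + 1)"
      proof -
        have "real (MK K) < real (K + m + 1)" using MkK by simp
        also have "\<dots> \<le> exp 1 * real (K + m + 1)" using e1 by simp
        finally show ?thesis .
      qed
      then show ?thesis unfolding p_def by (simp add: divide_less_eq)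
    qed
    have FX: "\<And>x. P.prob {\<omega> \<in> space M. X K k \<omega> \<le> x} = F x" if "k \<in> {1..K}" for k
      using ident that by auto
    have pk_gt: "P.prob {\<omega> \<in> space M. X K k \<omega> \<in> {q<..}} \<le> p" if "k \<in> {1..K}" for k
      using P.quantile(1)[OF meas FX[OF that] cont p0 p1] by (simp add: q_def)
    have pk_lt: "P.prob {\<omega> \<in> space M. X K k \<omega> \<in> {..<q}} \<le> 1 - p" if "k \<in> {1..K}" for k
      using P.quantile(2)[OF meas FX[OF that] cont p0 p1] by (simp add: q_def)
    define G where "G = {\<omega> \<in> space M. real (MK K) \<le> (\<Sum>k\<in>{1..K}. indicator {q<..} (X K k \<omega>))}"
    have Gb: "P.prob G \<le> real (m + 1) * exp (- (real (MK K) / (exp 1 * real (m + 1))))"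
      unfolding G_def
      by (rule P.G_bound[OF mdep meas _ pk_gt]) (use p0 in \<open>auto simp: p_def\<close>)
    have Gsets: "G \<in> P.events" unfolding G_def using meas by measurable
    have ordG: "{\<omega> \<in> space M. ord_stat (\<lambda>k. X K k \<omega>) K (K - MK K + 1) > q} \<subseteq> G"
    proof
      fix \<omega> assume \<omega>: "\<omega> \<in> {\<omega> \<in> space M. ord_stat (\<lambda>k. X K k \<omega>) K (K - MK K + 1) > q}"
      then have "MK K \<le> card {k \<in> {1..K}. X K k \<omega> > q}"
        using ord_stat_count[OF Mk1 MkK] by auto
      moreover have "(\<Sum>k\<in>{1..K}. indicator {q<..} (X K k \<omega>)) = real (card {k \<in> {1..K}. X K k \<omega> \<in> {q<..}})"
        by (rule sum_ind_card) simp
      ultimately show "\<omega> \<in> G" using \<omega> by (simp add: G_def)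
    qed
    have bound1: "real (m + 1) * exp (- (real (MK K) / (exp 1 * real (m + 1)))) \<le> real (m + 1) / real K powr (1 + \<epsilon> / 3)"
    proof -
      have lnK: "ln (real K) \<ge> 0" using K1 by simp
      have A1: "(exp 1 + \<epsilon>) * ln (real K) / exp 1 \<le> real (MK K) / (exp 1 * real (m + 1))"
      proof -
        have "real (m + 1) * (exp 1 + \<epsilon>) * ln (real K) / (exp 1 * real (m + 1)) \<le> real (MK K) / (exp 1 * real (m + 1))"
          by (rule divide_right_mono[OF MK_ge]) simp
        then show ?thesis by simp
      qed
      have A2: "(1 + \<epsilon> / 3) * ln (real K) \<le> (exp 1 + \<epsilon>) * ln (real K) / exp 1"
      proof -
        have "\<epsilon> / 3 \<le> \<epsilon> / exp 1" using eps exp_le by (intro divide_left_mono) auto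
        then have "1 + \<epsilon> / 3 \<le> (exp 1 + \<epsilon>) / exp 1" by (simp add: add_divide_distrib)
        then have "(1 + \<epsilon> / 3) * ln (real K) \<le> (exp 1 + \<epsilon>) / exp 1 * ln (real K)"
          using lnK by (rule mult_right_mono)
        then show ?thesis by simp
      qed
      have "exp (- (real (MK K) / (exp 1 * real (m + 1)))) \<le> exp (- ((1 + \<epsilon> / 3) * ln (real K)))"
        using A1 A2 by simp
      also have "\<dots> = 1 / real K powr (1 + \<epsilon> / 3)"
        using K1 by (simp add: powr_def exp_minus inverse_eq_divide)
      finally have ex: "exp (- (real (MK K) / (exp 1 * real (m + 1)))) \<le> 1 / real K powr (1 + \<epsilon> / 3)" .
      have "real (m + 1) * exp (- (real (MK K) / (exp 1 * real (m + 1)))) \<le> real (m + 1) * (1 / real K powr (1 + \<epsilon> / 3))"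
        by (rule mult_left_mono[OF ex]) simp
      then show ?thesis by simp
    qed
    show "measure M {\<omega> \<in> space M. ord_stat (\<lambda>k. X K k \<omega>) K (K - MK K + 1)
          > tail_quantile F (real (MK K) / (exp 1 * real (K + m + 1)))}
       \<le> real (m + 1) / real K powr (1 + \<epsilon> / 3)
   \<and> (\<forall>E \<subseteq> {1..K}.
       measure M {\<omega> \<in> space M.
          {k \<in> {1..K}. X K k \<omega> \<ge> ord_stat (\<lambda>k. X K k \<omega>) K (K - MK K + 1)} \<inter> E = {}}
       \<le> real (m + 1) * exp (- (real (MK K) / (exp 1 * real (m + 1)))
                 * ((1 - real (m + 1) / real K) / (1 + real (m + 1) / real K)))
         + (1 - real (MK K) / (exp 1 * real (K + m + 1))) powr (real (card E) / real (m + 1)))"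
      unfolding p_def[symmetric] q_def[symmetric]
    proof (intro conjI allI impI)
      have RHS0: "0 \<le> real (m + 1) / real K powr (1 + \<epsilon> / 3)" by simp
      show "measure M {\<omega> \<in> space M. ord_stat (\<lambda>k. X K k \<omega>) K (K - MK K + 1) > q}
            \<le> real (m + 1) / real K powr (1 + \<epsilon> / 3)"
      proof (cases "{\<omega> \<in> space M. ord_stat (\<lambda>k. X K k \<omega>) K (K - MK K + 1) > q} \<in> P.events")
        case True
        have "measure M {\<omega> \<in> space M. ord_stat (\<lambda>k. X K k \<omega>) K (K - MK K + 1) > q} \<le> P.prob G"
          by (rule P.finite_measure_mono[OF ordG Gsets])
        then show ?thesis using Gb bound1 by linarith
      next
        case False
        then show ?thesis using RHS0 by (simp add: measure_notin_sets)
      qed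
    next
      fix E assume E: "E \<subseteq> {1..K}"
      have finE: "finite E" using E finite_subset by blast
      obtain r where r: "r < d" and rbig: "real (card E) / real d \<le> real (card {k \<in> E. k mod d = r})"
        using exists_big_class[OF finE, of d] by (auto simp: d_def)
      define Er where "Er = {k \<in> E. k mod d = r}"
      define H where "H = {\<omega> \<in> space M. \<forall>k\<in>Er. X K k \<omega> \<in> {..<q}}"
      have finEr: "finite Er" using finE by (simp add: Er_def)
      have Hsets: "H \<in> P.events" using finEr unfolding H_def using meas by measurable
      have gapEr: "k + m < k'" if "k \<in> Er" "k' \<in> Er" "k < k'" for k k'
        using that class_gap[of k m r k'] by (simp add: Er_def d_def)
      have "P.prob H = (\<Prod>k\<in>Er. P.prob {\<omega> \<in> space M. X K k \<omega> \<in> {..<q}})"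
        unfolding H_def
        apply (rule P.indep_prod[OF mdep meas finEr])
        subgoal using E by (auto simp: Er_def)
        subgoal by (rule gapEr)
        subgoal by simp
        done
      also have "\<dots> \<le> (\<Prod>k\<in>Er. 1 - p)"
        by (intro prod_mono) (use E pk_lt in \<open>auto simp: Er_def\<close>)
      also have "\<dots> = (1 - p) powr real (card Er)"
        using p1 by (simp add: powr_realpow)
      also have "\<dots> \<le> (1 - p) powr (real (card E) / real (m + 1))"
        by (rule powr_mono') (use rbig p0 p1 in \<open>auto simp: Er_def d_def\<close>)
      finally have Hb: "P.prob H \<le> (1 - p) powr (real (card E) / real (m + 1))" .
      have frac: "(1 - real (m + 1) / real K) / (1 + real (m + 1) / real K) \<le> 1"
        using K1 by (simp add: divide_le_eq add_pos_nonneg)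
      have Gb2: "P.prob G \<le> real (m + 1) * exp (- (real (MK K) / (exp 1 * real (m + 1)))
                 * ((1 - real (m + 1) / real K) / (1 + real (m + 1) / real K)))"
      proof -
        have a0: "0 \<le> real (MK K) / (exp 1 * real (m + 1))" by simp
        have "- (real (MK K) / (exp 1 * real (m + 1))) \<le> - (real (MK K) / (exp 1 * real (m + 1)))
                 * ((1 - real (m + 1) / real K) / (1 + real (m + 1) / real K))"
          using mult_left_mono[OF frac a0] by simp
        then have "exp (- (real (MK K) / (exp 1 * real (m + 1)))) \<le> exp (- (real (MK K) / (exp 1 * real (m + 1)))
                 * ((1 - real (m + 1) / real K) / (1 + real (m + 1) / real K)))" by simp
        then show ?thesis using Gb by (smt (verit) mult_left_mono of_nat_0_le_iff)
      qed
      have sub: "{\<omega> \<in> space M. {k \<in> {1..K}. X K k \<omega> \<ge> ord_stat (\<lambda>k. X K k \<omega>) K (K - MK K + 1)} \<inter> E = {}} \<subseteq> G \<union> H"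
      proof
        fix \<omega> assume \<omega>: "\<omega> \<in> {\<omega> \<in> space M. {k \<in> {1..K}. X K k \<omega> \<ge> ord_stat (\<lambda>k. X K k \<omega>) K (K - MK K + 1)} \<inter> E = {}}"
        show "\<omega> \<in> G \<union> H"
        proof (cases "ord_stat (\<lambda>k. X K k \<omega>) K (K - MK K + 1) > q")
          case True
          then show ?thesis using ordG \<omega> by blast
        next
          case False
          have "X K k \<omega> < q" if "k \<in> Er" for k
          proof -
            have "k \<in> E" "k \<in> {1..K}" using that E by (auto simp: Er_def)
            then have "\<not> X K k \<omega> \<ge> ord_stat (\<lambda>k. X K k \<omega>) K (K - MK K + 1)" using \<omega> by blast
            then show ?thesis using False by simp
          qed
          then show ?thesis using \<omega> by (simp add: H_def)
        qed
      qed
      have RHS0: "0 \<le> real (m + 1) * exp (- (real (MK K) / (exp 1 * real (m + 1)))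
                 * ((1 - real (m + 1) / real K) / (1 + real (m + 1) / real K)))
         + (1 - p) powr (real (card E) / real (m + 1))" by simp
      show "measure M {\<omega> \<in> space M. {k \<in> {1..K}. X K k \<omega> \<ge> ord_stat (\<lambda>k. X K k \<omega>) K (K - MK K + 1)} \<inter> E = {}}
       \<le> real (m + 1) * exp (- (real (MK K) / (exp 1 * real (m + 1)))
                 * ((1 - real (m + 1) / real K) / (1 + real (m + 1) / real K)))
         + (1 - p) powr (real (card E) / real (m + 1))"
      proof (cases "{\<omega> \<in> space M. {k \<in> {1..K}. X K k \<omega> \<ge> ord_stat (\<lambda>k. X K k \<omega>) K (K - MK K + 1)} \<inter> E = {}} \<in> P.events")
        case True
        have "measure M {\<omega> \<in> space M. {k \<in> {1..K}. X K k \<omega> \<ge> ord_stat (\<lambda>k. X K k \<omega>) K (K - MK K + 1)} \<inter> E = {}} \<le> P.prob (G \<union> H)"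
          by (rule P.finite_measure_mono[OF sub]) (use Gsets Hsets in auto)
        also have "\<dots> \<le> P.prob G + P.prob H" by (rule measure_Un_le[OF Gsets Hsets])
        finally show ?thesis using Gb2 Hb by linarith
      next
        case False
        then show ?thesis using RHS0 by (simp add: measure_notin_sets)
      qed
    qed
  qed
qed


end
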